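(* For every $n\in\mathcal{N}_{z_q}$, \[ \{\theta(\gamma):\gamma\in\Gamma_{z_q,n}\}=\Bigl\{\arg(x+iy)\ :\ x,y\in\mathbb{R},\ y+ix\in\mathcal{O}_K,\ N(y+ix)=n^2-4\lambda^4,\ 2y\equiv 2n \pmod{q}\Bigr\}, \] where $2y\equiv 2n\pmod q$ means $2y-2n\in q\mathbb{Z}$.
   Context: Let $q\in\{3,4,7,8,11,19,43,67,163\}$ and let $K$ be the imaginary quadratic field of discriminant $-q$ (class number one), with ring of integers $\mathcal{O}_K$ and norm $N$. Let $z_q=\mu+i\lambda$ where $\mu=0$ if $q\in\{4,8\}$, $\mu=1/2$ otherwise, and $\lambda=\sqrt{q}/2$ (so $\mathcal{O}_K=\mathbb{Z}+\mathbb{Z}z_q$). Let $\mathbb{H}$ be the upper half-plane with hyperbolic distance $\rho$, $\cosh\rho(z,w)=1+\frac{|z-w|^2}{2\,\mathrm{Im}(z)\mathrm{Im}(w)}$, and $\Gamma=\mathrm{PSL}(2,\mathbb{Z})$ acting by Möbius transformations. For $\gamma\in\Gamma$ set $\mathcal{R}(\gamma;z_q)=2\lambda^2\cosh\rho(z_q,\gamma z_q)$, $\mathcal{N}_{z_q}=\{\mathcal{R}(\gamma;z_q):\gamma\in\Gamma\}$, and $\Gamma_{z_q,n}=\{\gamma\in\Gamma:\mathcal{R}(\gamma;z_q)=n\}$. For $\gamma z_q\neq z_q$, $\theta(\gamma)\in\mathbb{R}/2\pi\mathbb{Z}$ is the angle that the tangent vector at $z_q$ of the geodesic segment from $z_q$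 to $\gamma z_q$ makes with the positive horizontal direction. *)

theory Defs
  imports "HOL-Analysis.Analysis"
begin

text \<open>The admissible discriminants q (class number one).\<close>
definition admissible_q :: "nat set" where
  "admissible_q = {3, 4, 7, 8, 11, 19, 43, 67, 163}"

definition mu_q :: "nat \<Rightarrow> real" where
  "mu_q q = (if q \<in> {4, 8} then 0 else 1/2)"

definition lambda_q :: "nat \<Rightarrow> real" where
  "lambda_q q = sqrt (real q) / 2"

definition z_q :: "nat \<Rightarrow> complex" where
  "z_q q = Complex (mu_q q) (lambda_q q)"

definition O_K :: "nat \<Rightarrow> complex set" where
  "O_K q = {of_int a + of_int b * z_q q | a b :: int. True}"

definition normK :: "complex \<Rightarrow> real" where
  "normK \<alpha> = (cmod \<alpha>)\<^sup>2"

text \<open>Gamma = PSL(2,Z), realised as the group of Moebius maps it induces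
  (PSL(2,Z) acts faithfully on the upper half-plane).\<close>
definition moebius :: "int \<Rightarrow> int \<Rightarrow> int \<Rightarrow> int \<Rightarrow> complex \<Rightarrow> complex" where
  "moebius a b c d z = (of_int a * z + of_int b) / (of_int c * z + of_int d)"

definition Gamma :: "(complex \<Rightarrow> complex) set" where
  "Gamma = {moebius a b c d | a b c d :: int. a * d - b * c = 1}"

definition cosh_rho :: "complex \<Rightarrow> complex \<Rightarrow> real" where
  "cosh_rho z w = 1 + (cmod (z - w))\<^sup>2 / (2 * Im z * Im w)"

definition R_fun :: "nat \<Rightarrow> (complex \<Rightarrow> complex) \<Rightarrow> real" where
  "R_fun q \<gamma> = 2 * (lambda_q q)\<^sup>2 * cosh_rho (z_q q) (\<gamma> (z_q q))"

definition N_set :: "nat \<Rightarrow> real set" where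
  "N_set q = {R_fun q \<gamma> | \<gamma>. \<gamma> \<in> Gamma}"

definition Gamma_n :: "nat \<Rightarrow> real \<Rightarrow> (complex \<Rightarrow> complex) set" where
  "Gamma_n q n = {\<gamma> \<in> Gamma. R_fun q \<gamma> = n}"

text \<open>Geodesic segment from z to w in the upper half-plane: the isometry
  u \<mapsto> (u - z)/(u - cnj z) onto the unit disc sends z to 0, where the geodesics
  through 0 are the radii; pull back the radius t \<mapsto> t * phi(w), t in [0,1].\<close>
definition disc_map :: "complex \<Rightarrow> complex \<Rightarrow> complex" where
  "disc_map z u = (u - z) / (u - cnj z)"

definition disc_map_inv :: "complex \<Rightarrow> complex \<Rightarrow> complex" where
  "disc_map_inv z v = (z - cnj z * v) / (1 - v)"

definition geodesic_seg :: "complex \<Rightarrow> complex \<Rightarrow> real \<Rightarrow> complex" where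
  "geodesic_seg z w t = disc_map_inv z (complex_of_real t * disc_map z w)"

definition theta_angle :: "complex \<Rightarrow> complex \<Rightarrow> real" where
  "theta_angle z w = Arg (vector_derivative (geodesic_seg z w) (at 0 within {0..1}))"

end

theory Submission
  imports Defs
begin

lemma geo_deriv:
  "vector_derivative (geodesic_seg z w) (at 0 within {0..1}) = disc_map z w * (z - cnj z)"
proof -
  let ?p = "disc_map z w"
  have f: "((\<lambda>t. complex_of_real t * ?p) has_vector_derivative ?p) (at 0)"
  proof -
    have "bounded_linear (\<lambda>x. complex_of_real x * ?p)"
      by (rule bounded_linear_compose[OF bounded_linear_mult_left bounded_linear_of_real])
    then show ?thesis
      by (auto simp: has_vector_derivative_def has_derivative_def scaleR_conv_of_real algebra_simps)
  qed
  have g: "(disc_map_inv z has_field_derivative (z - cnj z)) (at ((\<lambda>t. complex_of_real t * ?p) 0))"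
    unfolding disc_map_inv_def by (auto intro!: derivative_eq_intros)
  have "geodesic_seg z w = disc_map_inv z \<circ> (\<lambda>t. complex_of_real t * ?p)"
    by (auto simp: geodesic_seg_def fun_eq_iff)
  moreover have "((disc_map_inv z \<circ> (\<lambda>t. complex_of_real t * ?p)) has_vector_derivative (?p * (z - cnj z))) (at 0)"
    by (rule field_vector_diff_chain_at[OF f g])
  ultimately show ?thesis
    by (metis vector_derivative_at_within_ivl order_refl zero_le_one zero_less_one)
qed

lemma QZ_factor:
  fixes \<mu> s A B C :: real
  assumes s: "s > 0" and A: "A > 0" and d: "4*A*C - B^2 = s^2"
  defines "z \<equiv> Complex \<mu> (s/2)" and "w \<equiv> Complex (-B/(2*A)) (s/(2*A))"
  shows "of_real A * z^2 + of_real B * z + of_real C = of_real A * (w - z) * (cnj w - z)"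
proof -
  have C: "C = (s^2 + B^2)/(4*A)" using d A by (simp add: field_simps)
  show ?thesis unfolding z_def w_def C using A
    by (simp add: complex_eq_iff power2_eq_square field_simps)
qed

lemma R_form:
  fixes \<mu> s A B C :: real
  assumes s: "s > 0" and A: "A > 0" and d: "4*A*C - B^2 = s^2"
  defines "z \<equiv> Complex \<mu> (s/2)" and "w \<equiv> Complex (-B/(2*A)) (s/(2*A))"
  shows "2 * (s/2)^2 * cosh_rho z w = A*(\<mu>^2 + s^2/4) + \<mu>*B + C"
proof -
  have C: "C = (s^2 + B^2)/(4*A)" using d A by (simp add: field_simps)
  show ?thesis unfolding z_def w_def C cosh_rho_def cmod_power2
    using s A by (simp add: power2_eq_square field_simps)
qed

lemma QZ_norm:
  fixes \<mu> s A B C :: real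
  defines "z \<equiv> Complex \<mu> (s/2)"
  shows "(cmod (of_real A * z^2 + of_real B * z + of_real C))^2
     = (A*(\<mu>^2 + s^2/4) + \<mu>*B + C)^2 - s^2*(4*A*C - B^2)/4"
  unfolding z_def cmod_power2 by (simp add: power2_eq_square field_simps)

lemma QZ_re:
  fixes \<mu> s A B C :: real
  defines "z \<equiv> Complex \<mu> (s/2)"
  shows "Re (of_real A * z^2 + of_real B * z + of_real C) = (A*(\<mu>^2 + s^2/4) + \<mu>*B + C) - (A * s^2) / 2"
  unfolding z_def by (simp add: power2_eq_square field_simps)

lemma scal_helper:
  fixes X :: complex and c s A :: real
  assumes "c \<noteq> 0" "A \<noteq> 0"
  shows "X / of_real c * (\<i> * of_real s) = of_real (s / (A * c)) * (\<i> * (of_real A * X))"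
  using assms by (simp add: field_simps)

lemma theta_form:
  fixes \<mu> s A B C :: real
  assumes s: "s > 0" and A: "A > 0" and d: "4*A*C - B^2 = s^2"
  defines "z \<equiv> Complex \<mu> (s/2)" and "w \<equiv> Complex (-B/(2*A)) (s/(2*A))"
  shows "theta_angle z w = Arg (\<i> * (of_real A * z^2 + of_real B * z + of_real C))"
proof -
  have Q: "of_real A * z^2 + of_real B * z + of_real C = of_real A * ((w - z) * (cnj w - z))"
    unfolding z_def w_def using QZ_factor[OF s A d] by (simp add: mult.assoc)
  have im: "Im (w - cnj z) = s/(2*A) + s/2" by (simp add: z_def w_def)
  have "Im (w - cnj z) > 0" unfolding im using s A by (simp add: add_pos_pos)
  then have ne: "w - cnj z \<noteq> 0" by auto
  let ?c = "(cmod (w - cnj z))^2"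
  have c: "?c \<noteq> 0" using ne by simp
  let ?r = "s / (A * ?c)"
  have r: "?r > 0" using s A ne by simp
  have zz: "z - cnj z = \<i> * of_real s" unfolding z_def by (simp add: complex_eq_iff)
  have "disc_map z w * (z - cnj z) = (w - z) * cnj (w - cnj z) / of_real ?c * (\<i> * of_real s)"
    unfolding disc_map_def zz by (subst complex_div_cnj) simp
  also have "\<dots> = of_real ?r * (\<i> * (of_real A * ((w - z) * cnj (w - cnj z))))"
    by (rule scal_helper[OF c]) (use A in simp)
  also have "\<dots> = of_real ?r * (\<i> * (of_real A * z^2 + of_real B * z + of_real C))"
    unfolding Q by simp
  finally have eq: "disc_map z w * (z - cnj z) = of_real ?r * (\<i> * (of_real A * z^2 + of_real B * z + of_real C))" .
  show ?thesis unfolding theta_angle_def geo_deriv eq by (rule Arg_times_of_real[OF r])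
qed

definition wpt :: "real \<Rightarrow> int \<Rightarrow> int \<Rightarrow> int \<Rightarrow> complex" where
  "wpt s A B C = Complex (- of_int B / (2 * of_int A)) (s / (2 * of_int A))"

lemma lin_nonreal:
  fixes x y :: int and u :: complex
  assumes "Im u \<noteq> 0" "of_int x * u + of_int y = 0"
  shows "x = 0 \<and> y = 0"
proof -
  have "Im (of_int x * u + of_int y) = 0" using assms(2) by simp
  then have "x = 0" using assms(1) by simp
  then show ?thesis using assms(2) by simp
qed

lemma moeb_step:
  fixes a b c d k :: int and u :: complex
  assumes "Im u \<noteq> 0" "a*d - b*c = 1"
  shows "moebius (k*a - c) (k*b - d) a b u = of_int k - 1 / moebius a b c d u"
proof -
  have n1: "of_int c * u + of_int d \<noteq> 0" using lin_nonreal[OF assms(1), of c d] assms(2) by auto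
  have n2: "of_int a * u + of_int b \<noteq> 0" using lin_nonreal[OF assms(1), of a b] assms(2) by auto
  show ?thesis unfolding moebius_def using n1 n2 by (simp add: field_simps)
qed

lemma k_exists:
  fixes A B :: int assumes "A > 0"
  shows "\<exists>k. \<bar>B + 2*A*k\<bar> \<le> A"
proof -
  define Q where "Q = (B + A) div (2*A)"
  define r where "r = (B + A) mod (2*A)"
  have e: "Q * (2*A) + r = B + A" unfolding Q_def r_def by (rule div_mult_mod_eq)
  have "0 \<le> r" "r < 2*A" unfolding r_def using assms by simp_all
  then have "\<bar>B + 2*A*(-Q)\<bar> \<le> A" using e by (simp add: algebra_simps abs_le_iff)
  then show ?thesis by blast
qed

lemma fwd_ids:
  fixes a b c d t m :: int
  assumes det: "a*d - b*c = 1"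
  defines "A \<equiv> d^2 + t*c*d + m*c^2" and "B \<equiv> -2*b*d - t*(a*d+b*c) - 2*m*a*c"
    and "C \<equiv> b^2 + t*a*b + m*a^2"
  shows "-B*(c*t + 2*d) - c*(4*m - t^2) = 2*A*(a*t + 2*b)"
    and "-B*c + c*t + 2*d = 2*A*a"
    and "B^2 - 4*A*C = -(4*m - t^2)"
    and "4*A = (2*d + t*c)^2 + (4*m - t^2)*c^2"
  using det unfolding A_def B_def C_def
  by (algebra, algebra, algebra, simp add: power2_eq_square algebra_simps)

lemma orbit_fwd:
  fixes a b c d t m :: int and s :: real
  assumes s: "s > 0" and s2: "s^2 = of_int (4*m - t^2)" and qp: "4*m - t^2 > 0"
    and det: "a*d - b*c = 1"
  defines "A \<equiv> d^2 + t*c*d + m*c^2" and "B \<equiv> -2*b*d - t*(a*d+b*c) - 2*m*a*c"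
    and "C \<equiv> b^2 + t*a*b + m*a^2"
  shows "A > 0" and "B^2 - 4*A*C = -(4*m - t^2)"
    and "moebius a b c d (Complex (of_int t/2) (s/2)) = wpt s A B C"
proof -
  note ids = fwd_ids[OF det, of t m, folded A_def B_def C_def]
  show "B^2 - 4*A*C = -(4*m - t^2)" by (rule ids(3))
  show Apos: "A > 0"
  proof (cases "c = 0")
    case True
    then have "d \<noteq> 0" using det by auto
    then show ?thesis using ids(4) True by (simp add: power2_eq_square) (metis not_square_less_zero linorder_neqE_linordered_idom mult_neg_neg mult_pos_pos)
  next
    case False
    have "(4*m - t^2)*c^2 > 0" using False qp by simp
    moreover have "(2*d + t*c)^2 \<ge> 0" by simp
    ultimately show ?thesis using ids(4) by linarith
  qed
  let ?z = "Complex (of_int t/2) (s/2)"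
  have im: "Im ?z \<noteq> 0" using s by simp
  have n1: "of_int c * ?z + of_int d \<noteq> 0" using lin_nonreal[OF im, of c d] det by auto
  have r1: "- real_of_int B*(of_int c* of_int t + 2* of_int d) - of_int c* s^2 = 2* of_int A*(of_int a* of_int t + 2* of_int b)"
    unfolding s2 using arg_cong[OF ids(1), of real_of_int] by simp
  have r2: "- real_of_int B* of_int c + of_int c* of_int t + 2* of_int d = 2* of_int A* of_int a"
    using arg_cong[OF ids(2), of real_of_int] by simp
  have Ar: "real_of_int A > 0" using Apos by simp
  have "wpt s A B C * (of_int c * ?z + of_int d) = of_int a * ?z + of_int b"
  proof -
    have e1: "(- of_int B / (2 * of_int A)) * (of_int c * (of_int t / 2) + of_int d) - s / (2 * of_int A) * (of_int c * (s/2))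
        = real_of_int a * (of_int t/2) + of_int b"
    proof -
      have "(- of_int B / (2 * of_int A)) * (of_int c * (of_int t / 2) + of_int d) - s / (2 * of_int A) * (of_int c * (s/2))
          = (- real_of_int B*(of_int c * of_int t + 2 * of_int d) - of_int c * s^2) / (4 * of_int A)"
        using Ar by (simp add: field_simps power2_eq_square)
      also have "\<dots> = real_of_int a * (of_int t/2) + of_int b" unfolding r1 using Ar by (simp add: field_simps)
      finally show ?thesis .
    qed
    have e2: "(- of_int B / (2 * of_int A)) * (of_int c * (s/2)) + s / (2 * of_int A) * (of_int c * (of_int t / 2) + of_int d)
        = real_of_int a * (s/2)"
    proof -
      have "(- of_int B / (2 * of_int A)) * (of_int c * (s/2)) + s / (2 * of_int A) * (of_int c * (of_int t / 2) + of_int d)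
          = s / (4 * of_int A) * (- real_of_int B* of_int c + of_int c* of_int t + 2* of_int d)"
        using Ar by (simp add: field_simps)
      also have "\<dots> = real_of_int a * (s/2)" unfolding r2 using Ar by (simp add: field_simps)
      finally show ?thesis .
    qed
    show ?thesis unfolding wpt_def using e1 e2 by (simp add: complex_eq_iff)
  qed
  then show "moebius a b c d ?z = wpt s A B C" unfolding moebius_def using n1
    by (simp add: field_simps)
qed

lemma wpt_step:
  fixes s :: real and A B C k qq :: int
  assumes s: "s > 0" and s2: "s^2 = of_int qq" and A: "A > 0"
    and d: "B^2 - 4*A*C = - qq" and Cp: "C + B*k + A*k^2 > 0"
  shows "wpt s A B C = of_int k - 1 / wpt s (C + B*k + A*k^2) (-(B + 2*A*k)) A"
proof -
  define B' where "B' = B + 2*A*k"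
  define C' where "C' = C + B*k + A*k^2"
  have d': "B'^2 + qq = 4*A*C'" unfolding B'_def C'_def using d by (simp add: power2_eq_square algebra_simps)
  have d'r: "(real_of_int B')^2 + s^2 = 4 * real_of_int A * real_of_int C'"
    unfolding s2 using arg_cong[OF d', of real_of_int] by simp
  have "C' > 0" using Cp unfolding C'_def .
  then have Cr: "real_of_int C' > 0" by simp
  have Ar: "real_of_int A > 0" using A by simp
  let ?W = "wpt s C' (-B') A"
  have W0: "?W \<noteq> 0"
  proof
    assume "?W = 0" then have "Im ?W = 0" by simp
    then show False using s Cr unfolding wpt_def by simp
  qed
  have "(wpt s A B C - of_int k) * ?W = -1"
  proof -
    have e1: "wpt s A B C - of_int k = Complex (- of_int B' / (2 * of_int A)) (s / (2 * of_int A))"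
      unfolding wpt_def B'_def using Ar by (simp add: complex_eq_iff field_simps)
    have "Re ((wpt s A B C - of_int k) * ?W) = - ((real_of_int B')^2 + s^2) / (4 * of_int A * of_int C')"
      unfolding e1 unfolding wpt_def using Ar Cr by (simp add: field_simps power2_eq_square)
    also have "\<dots> = -1" unfolding d'r using Ar Cr by simp
    finally have re: "Re ((wpt s A B C - of_int k) * ?W) = -1" .
    have im: "Im ((wpt s A B C - of_int k) * ?W) = 0"
      unfolding e1 unfolding wpt_def using Ar Cr by (simp add: field_simps)
    show ?thesis using re im by (simp add: complex_eq_iff)
  qed
  then have "wpt s A B C = of_int k - 1 / ?W" using W0 by (simp add: field_simps)
  then show ?thesis unfolding B'_def C'_def .
qed

lemma orbit_bwd:
  fixes t m :: int and s :: real
  assumes s: "s > 0" and s2: "s^2 = of_int (4*m - t^2)" and qp: "4*m - t^2 > 0"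
    and nored: "\<And>A B C::int. 2 \<le> A \<Longrightarrow> A \<le> C \<Longrightarrow> \<bar>B\<bar> \<le> A \<Longrightarrow> B^2 - 4*A*C = -(4*m - t^2) \<Longrightarrow> False"
  shows "\<And>A B C::int. A > 0 \<Longrightarrow> B^2 - 4*A*C = -(4*m - t^2) \<Longrightarrow>
     \<exists>a b c d. a*d - b*c = 1 \<and> moebius a b c d (Complex (of_int t/2) (s/2)) = wpt s A B C"
proof -
  let ?z = "Complex (of_int t/2) (s/2)"
  have main: "\<forall>A B C::int. A = int N \<longrightarrow> A > 0 \<longrightarrow> B^2 - 4*A*C = -(4*m - t^2) \<longrightarrow>
     (\<exists>a b c d. a*d - b*c = 1 \<and> moebius a b c d ?z = wpt s A B C)" for N
  proof (induction N rule: less_induct)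
    case (less N)
    show ?case
    proof (intro allI impI)
      fix A B C :: int
      assume AN: "A = int N" and A: "A > 0" and d: "B^2 - 4*A*C = -(4*m - t^2)"
      show "\<exists>a b c d. a*d - b*c = 1 \<and> moebius a b c d ?z = wpt s A B C"
      proof (cases "A = 1")
        case True
        have "even (B - t)"
        proof (rule ccontr)
          assume "odd (B - t)"
          then have "odd ((B - t) + 2*t)" by simp
          then have "odd (B + t)" by simp
          then have "odd ((B - t)*(B + t))" using \<open>odd (B - t)\<close> by simp
          moreover have "(B - t)*(B + t) = 4*(C - m)" using d True by (simp add: power2_eq_square algebra_simps)
          ultimately show False by simp
        qed
        then obtain j0 where j0: "B - t = 2*j0" by (rule evenE)
        define j where "j = -j0 - t"
        have j: "-B - t = 2*j" unfolding j_def using j0 by simp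
        have jr: "real_of_int j = (- of_int B - of_int t)/2" using arg_cong[OF j, of real_of_int] by simp
        have "moebius 1 j 0 1 ?z = wpt s A B C"
          unfolding moebius_def wpt_def True using jr by (simp add: complex_eq_iff field_simps)
        then show ?thesis by (intro exI[of _ 1] exI[of _ j] exI[of _ 0] exI[of _ 1]) simp
      next
        case False
        with A have A2: "A \<ge> 2" by simp
        obtain k where k: "\<bar>B + 2*A*k\<bar> \<le> A" using k_exists[OF A] by blast
        define B' where "B' = B + 2*A*k"
        define C' where "C' = C + B*k + A*k^2"
        have d': "B'^2 - 4*A*C' = -(4*m - t^2)" unfolding B'_def C'_def using d
          by (simp add: power2_eq_square algebra_simps)
        have C'lt: "C' < A"
        proof (rule ccontr)
          assume "\<not> C' < A"
          then show False using nored[OF A2 _ _ d'] k unfolding B'_def by simp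
        qed
        have C'pos: "C' > 0"
        proof -
          have "4*A*C' > 0" using d' qp by (smt (verit) zero_le_power2)
          then show ?thesis using A by (simp add: zero_less_mult_iff)
        qed
        have d2: "(-B')^2 - 4*C'*A = -(4*m - t^2)" using d' by (simp add: algebra_simps)
        have CN: "nat C' < N" using C'lt AN C'pos by simp
        have ex: "\<exists>a b c d. a*d - b*c = 1 \<and> moebius a b c d ?z = wpt s C' (-B') A"
          using less.IH[OF CN, rule_format, of C' "-B'" A, OF _ C'pos d2] C'pos by simp
        then obtain a b c dd where det: "a*dd - b*c = 1" and eq: "moebius a b c dd ?z = wpt s C' (-B') A"
          by blast
        have "moebius (k*a - c) (k*b - dd) a b ?z = of_int k - 1 / wpt s C' (-B') A"
          using moeb_step[of ?z a dd b c k] det eq s by simp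
        also have "\<dots> = wpt s A B C"
          using wpt_step[OF s s2 A d] C'pos unfolding B'_def C'_def by simp
        finally have "moebius (k*a - c) (k*b - dd) a b ?z = wpt s A B C" .
        moreover have "(k*a - c)*b - (k*b - dd)*a = 1" using det by (simp add: algebra_simps)
        ultimately show ?thesis by blast
      qed
    qed
  qed
  fix A B C :: int
  assume "A > 0" "B^2 - 4*A*C = -(4*m - t^2)"
  then show "\<exists>a b c d. a*d - b*c = 1 \<and> moebius a b c d ?z = wpt s A B C"
    using main[of "nat A"] by simp
qed

lemma z_lin:
  fixes t m :: int and s :: real and A B C :: int
  assumes s2: "s^2 = of_int (4*m - t^2)"
  defines "z \<equiv> Complex (of_int t/2) (s/2)"
  shows "of_int A * z^2 + of_int B * z + of_int C = of_int (C - A*m) + of_int (A*t + B) * z"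
    and "cnj z = of_int t - z"
proof -
  have zz: "z^2 = of_int t * z - of_int m"
  proof -
    have ss: "s * s = 4 * of_int m - of_int t * of_int t" using s2 by (simp add: power2_eq_square)
    have re: "Re (z^2) = Re (of_int t * z - of_int m)"
    proof -
      have "Re (z^2) = (of_int t/2)*(of_int t/2) - (s/2)*(s/2)" unfolding z_def by (simp add: power2_eq_square)
      also have "\<dots> = of_int t * (of_int t/2) - of_int m" using ss by (simp add: field_simps)
      finally show ?thesis unfolding z_def by simp
    qed
    have im: "Im (z^2) = Im (of_int t * z - of_int m)" unfolding z_def by (simp add: power2_eq_square)
    show ?thesis using re im by (simp add: complex_eq_iff)
  qed
  show "of_int A * z^2 + of_int B * z + of_int C = of_int (C - A*m) + of_int (A*t + B) * z"
    unfolding zz by (simp add: algebra_simps)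
  show "cnj z = of_int t - z" unfolding z_def by (simp add: complex_eq_iff)
qed

lemma form_facts:
  fixes t m :: int and s :: real and A B C :: int and z QZ :: complex and val :: real
  assumes s: "s > 0" and s2: "s^2 = of_int (4*m - t^2)" and A: "A > 0"
    and d: "B^2 - 4*A*C = -(4*m - t^2)"
    and z_def: "z = Complex (of_int t/2) (s/2)"
    and QZ_def: "QZ = of_int A * z^2 + of_int B * z + of_int C"
    and val_def: "val = of_int A * of_int m + of_int t * of_int B / 2 + (of_int C :: real)"
  shows "2*(s/2)^2 * cosh_rho z (wpt s A B C) = val"
    and "theta_angle z (wpt s A B C) = Arg (\<i> * QZ)"
    and "wpt s A B C = z \<longleftrightarrow> QZ = 0"
    and "(cmod QZ)^2 = val^2 - s^4/4"
    and "Re QZ = val - of_int A * s^2/2"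
    and "val > 0"
proof -
  have Ar: "real_of_int A > 0" using A by simp
  have dr: "4 * real_of_int A * of_int C - (of_int B)^2 = s^2"
    using arg_cong[OF d, of real_of_int] s2 by simp
  have mm: "(of_int t / 2)^2 + s^2/4 = real_of_int m" using s2 by (simp add: field_simps power2_eq_square)
  show "2*(s/2)^2 * cosh_rho z (wpt s A B C) = val"
    using R_form[OF s Ar dr, of "of_int t/2"] unfolding val_def z_def wpt_def mm
    by (simp add: algebra_simps)
  show "theta_angle z (wpt s A B C) = Arg (\<i> * QZ)"
    using theta_form[OF s Ar dr, of "of_int t/2"] unfolding QZ_def z_def wpt_def by simp
  have fac: "QZ = of_int A * (wpt s A B C - z) * (cnj (wpt s A B C) - z)"
    using QZ_factor[OF s Ar dr, of "of_int t/2"] unfolding QZ_def z_def wpt_def by simp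
  have c2: "cnj (wpt s A B C) - z \<noteq> 0"
  proof
    assume "cnj (wpt s A B C) - z = 0"
    then have "Im (cnj (wpt s A B C) - z) = 0" by simp
    then have "- (s / (2 * of_int A)) - s/2 = 0" unfolding wpt_def z_def by simp
    moreover have "s / (2 * of_int A) > 0" using s Ar by simp
    ultimately show False using s by simp
  qed
  show "wpt s A B C = z \<longleftrightarrow> QZ = 0" unfolding fac using c2 Ar by auto
  have nrm: "(cmod QZ)^2 = val^2 - s^2*(4* of_int A* of_int C - (of_int B)^2)/4"
    using QZ_norm[of "of_int A" "of_int t/2" s "of_int B" "of_int C"] unfolding QZ_def val_def z_def mm
    by (simp add: algebra_simps)
  show "(cmod QZ)^2 = val^2 - s^4/4" unfolding nrm dr by (simp add: power2_eq_square power4_eq_xxxx)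
  show "Re QZ = val - of_int A * s^2/2"
    using QZ_re[of "of_int A" "of_int t/2" s "of_int B" "of_int C"] unfolding QZ_def val_def z_def mm
    by (simp add: algebra_simps)
  have "4 * of_int A * val = (of_int B + of_int t * of_int A)^2 + s^2 * (of_int A)^2 + s^2"
  proof -
    have "4 * of_int A * val = 4 * (of_int A)^2 * of_int m + 2 * of_int t * of_int A * of_int B + 4 * of_int A * of_int C"
      unfolding val_def by (simp add: algebra_simps power2_eq_square)
    also have "\<dots> = (of_int B + of_int t * of_int A)^2 + s^2 * (of_int A)^2 + s^2"
    proof -
      have m4: "4 * real_of_int m = s^2 + (of_int t)^2" using s2 by simp
      have "4 * (of_int A)^2 * of_int m = (of_int A)^2 * (4 * real_of_int m)" by simp
      also have "\<dots> = (of_int A)^2 * (s^2 + (of_int t)^2)" unfolding m4 ..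
      finally have e1: "4 * (of_int A)^2 * of_int m = (of_int A)^2 * (s^2 + (of_int t)^2)" .
      have e2: "4 * real_of_int A * of_int C = s^2 + (of_int B)^2" using dr by simp
      show ?thesis unfolding e1 using e2 by algebra
    qed
    finally show ?thesis .
  qed
  moreover have "(of_int B + of_int t * of_int A)^2 + s^2 * (of_int A)^2 + s^2 > 0"
    using s by (simp add: add_nonneg_pos)
  ultimately have "4 * of_int A * val > 0" by simp
  then show "val > 0" using Ar by (simp add: zero_less_mult_iff)
qed

lemma sq_bound:
  fixes A K :: int
  assumes "0 \<le> A" "3*(A*A) \<le> 3*(K+1)*(K+1) - 1" "0 \<le> K"
  shows "A \<le> K"
proof (rule ccontr)
  assume "\<not> A \<le> K" then have "K+1 \<le> A" by simp
  then have "(K+1)*(K+1) \<le> A*A" using mult_mono[of "K+1" A "K+1" A] assms by simp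
  then show False using assms by simp
qed

lemma nored_3:
  fixes A b C :: int
  assumes A2: "2 \<le> A" and bA: "b \<le> A" "0 \<le> b" and h3: "3*(A*A) \<le> 3"
    and m0: "(b*b + 3) mod (4*A) = 0" and key: "A \<le> (b*b + 3) div (4*A)"
  shows False
proof -
  have "A \<le> 1" using sq_bound[of A 1] A2 h3 by simp
  then show False using A2 by simp
qed

lemma nored_4:
  fixes A b C :: int
  assumes A2: "2 \<le> A" and bA: "b \<le> A" "0 \<le> b" and h3: "3*(A*A) \<le> 4"
    and m0: "(b*b + 4) mod (4*A) = 0" and key: "A \<le> (b*b + 4) div (4*A)"
  shows False
proof -
  have "A \<le> 1" using sq_bound[of A 1] A2 h3 by simp
  then show False using A2 by simp
qed

lemma nored_7:
  fixes A b C :: int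
  assumes A2: "2 \<le> A" and bA: "b \<le> A" "0 \<le> b" and h3: "3*(A*A) \<le> 7"
    and m0: "(b*b + 7) mod (4*A) = 0" and key: "A \<le> (b*b + 7) div (4*A)"
  shows False
proof -
  have "A \<le> 1" using sq_bound[of A 1] A2 h3 by simp
  then show False using A2 by simp
qed

lemma nored_8:
  fixes A b C :: int
  assumes A2: "2 \<le> A" and bA: "b \<le> A" "0 \<le> b" and h3: "3*(A*A) \<le> 8"
    and m0: "(b*b + 8) mod (4*A) = 0" and key: "A \<le> (b*b + 8) div (4*A)"
  shows False
proof -
  have "A \<le> 1" using sq_bound[of A 1] A2 h3 by simp
  then show False using A2 by simp
qed

lemma nored_11:
  fixes A b C :: int
  assumes A2: "2 \<le> A" and bA: "b \<le> A" "0 \<le> b" and h3: "3*(A*A) \<le> 11"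
    and m0: "(b*b + 11) mod (4*A) = 0" and key: "A \<le> (b*b + 11) div (4*A)"
  shows False
proof -
  have "A \<le> 1" using sq_bound[of A 1] A2 h3 by simp
  then show False using A2 by simp
qed

lemma nored_19:
  fixes A b C :: int
  assumes A2: "2 \<le> A" and bA: "b \<le> A" "0 \<le> b" and h3: "3*(A*A) \<le> 19"
    and m0: "(b*b + 19) mod (4*A) = 0" and key: "A \<le> (b*b + 19) div (4*A)"
  shows False
proof -
  have "A \<le> 2" using sq_bound[of A 2] A2 h3 by simp
  then have "A \<in> {2}" using A2 by auto
  then show False
  proof (elim insertE emptyE)
    assume a: "A = 2"
    then have "b \<in> {0,1,2}" using bA by auto
    then show False using m0 key a by (elim insertE emptyE; simp)
  qed
qed

lemma nored_43:
  fixes A b C :: int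
  assumes A2: "2 \<le> A" and bA: "b \<le> A" "0 \<le> b" and h3: "3*(A*A) \<le> 43"
    and m0: "(b*b + 43) mod (4*A) = 0" and key: "A \<le> (b*b + 43) div (4*A)"
  shows False
proof -
  have "A \<le> 3" using sq_bound[of A 3] A2 h3 by simp
  then have "A \<in> {2,3}" using A2 by auto
  then show False
  proof (elim insertE emptyE)
    assume a: "A = 2"
    then have "b \<in> {0,1,2}" using bA by auto
    then show False using m0 key a by (elim insertE emptyE; simp)
  next
    assume a: "A = 3"
    then have "b \<in> {0,1,2,3}" using bA by auto
    then show False using m0 key a by (elim insertE emptyE; simp)
  qed
qed

lemma nored_67:
  fixes A b C :: int
  assumes A2: "2 \<le> A" and bA: "b \<le> A" "0 \<le> b" and h3: "3*(A*A) \<le> 67"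
    and m0: "(b*b + 67) mod (4*A) = 0" and key: "A \<le> (b*b + 67) div (4*A)"
  shows False
proof -
  have "A \<le> 4" using sq_bound[of A 4] A2 h3 by simp
  then have "A \<in> {2,3,4}" using A2 by auto
  then show False
  proof (elim insertE emptyE)
    assume a: "A = 2"
    then have "b \<in> {0,1,2}" using bA by auto
    then show False using m0 key a by (elim insertE emptyE; simp)
  next
    assume a: "A = 3"
    then have "b \<in> {0,1,2,3}" using bA by auto
    then show False using m0 key a by (elim insertE emptyE; simp)
  next
    assume a: "A = 4"
    then have "b \<in> {0,1,2,3,4}" using bA by auto
    then show False using m0 key a by (elim insertE emptyE; simp)
  qed
qed

lemma nored_163:
  fixes A b C :: int
  assumes A2: "2 \<le> A" and bA: "b \<le> A" "0 \<le> b" and h3: "3*(A*A) \<le> 163"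
    and m0: "(b*b + 163) mod (4*A) = 0" and key: "A \<le> (b*b + 163) div (4*A)"
  shows False
proof -
  have "A \<le> 7" using sq_bound[of A 7] A2 h3 by simp
  then have "A \<in> {2,3,4,5,6,7}" using A2 by auto
  then show False
  proof (elim insertE emptyE)
    assume a: "A = 2"
    then have "b \<in> {0,1,2}" using bA by auto
    then show False using m0 key a by (elim insertE emptyE; simp)
  next
    assume a: "A = 3"
    then have "b \<in> {0,1,2,3}" using bA by auto
    then show False using m0 key a by (elim insertE emptyE; simp)
  next
    assume a: "A = 4"
    then have "b \<in> {0,1,2,3,4}" using bA by auto
    then show False using m0 key a by (elim insertE emptyE; simp)
  next
    assume a: "A = 5"
    then have "b \<in> {0,1,2,3,4,5}" using bA by auto
    then show False using m0 key a by (elim insertE emptyE; simp)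
  next
    assume a: "A = 6"
    then have "b \<in> {0,1,2,3,4,5,6}" using bA by auto
    then show False using m0 key a by (elim insertE emptyE; simp)
  next
    assume a: "A = 7"
    then have "b \<in> {0,1,2,3,4,5,6,7}" using bA by auto
    then show False using m0 key a by (elim insertE emptyE; simp)
  qed
qed

lemma nored:
  fixes A B C q :: int
  assumes q: "q \<in> {3,4,7,8,11,19,43,67,163}"
    and A2: "2 \<le> A" and AC: "A \<le> C" and BA: "\<bar>B\<bar> \<le> A" and d: "B^2 - 4*A*C = -q"
  shows False
proof -
  define b where "b = \<bar>B\<bar>"
  have b2: "B^2 = b*b" unfolding b_def by (simp add: power2_eq_square)
  have e: "b*b + q = 4*(A*C)" using d b2 by (simp add: algebra_simps)
  have h1: "A*A \<le> A*C" using AC A2 by simp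
  have bA: "b \<le> A" "0 \<le> b" using BA unfolding b_def by simp_all
  have h2: "b*b \<le> A*A" using mult_mono[OF bA(1) bA(1)] bA A2 by simp
  have h3: "3*(A*A) \<le> q" using h1 h2 e by linarith
  have m0: "(b*b + q) mod (4*A) = 0" unfolding e by simp
  have dv: "(b*b + q) div (4*A) = C" unfolding e using A2 by simp
  have key: "A \<le> (b*b + q) div (4*A)" using dv AC by simp
  from q show False
  proof (elim insertE emptyE)
    assume "q = 3" then show False using nored_3[OF A2 bA] h3 m0 key by simp
  next
    assume "q = 4" then show False using nored_4[OF A2 bA] h3 m0 key by simp
  next
    assume "q = 7" then show False using nored_7[OF A2 bA] h3 m0 key by simp
  next
    assume "q = 8" then show False using nored_8[OF A2 bA] h3 m0 key by simp
  next
    assume "q = 11" then show False using nored_11[OF A2 bA] h3 m0 key by simp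
  next
    assume "q = 19" then show False using nored_19[OF A2 bA] h3 m0 key by simp
  next
    assume "q = 43" then show False using nored_43[OF A2 bA] h3 m0 key by simp
  next
    assume "q = 67" then show False using nored_67[OF A2 bA] h3 m0 key by simp
  next
    assume "q = 163" then show False using nored_163[OF A2 bA] h3 m0 key by simp
  qed
qed

lemma q_setup:
  assumes "q \<in> admissible_q"
  shows "\<exists>t m::int. mu_q q = of_int t / 2 \<and> 4*m - t^2 = int q \<and> int q \<in> {3,4,7,8,11,19,43,67,163}"
proof -
  have "q = 3 \<or> q = 4 \<or> q = 7 \<or> q = 8 \<or> q = 11 \<or> q = 19 \<or> q = 43 \<or> q = 67 \<or> q = 163"
    using assms by (simp add: admissible_q_def)
  then show ?thesis
  proof (elim disjE)
    assume "q = 3" then show ?thesis by (intro exI[of _ 1] exI[of _ 1]) (simp add: mu_q_def)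
  next
    assume "q = 4" then show ?thesis by (intro exI[of _ 0] exI[of _ 1]) (simp add: mu_q_def)
  next
    assume "q = 7" then show ?thesis by (intro exI[of _ 1] exI[of _ 2]) (simp add: mu_q_def)
  next
    assume "q = 8" then show ?thesis by (intro exI[of _ 0] exI[of _ 2]) (simp add: mu_q_def)
  next
    assume "q = 11" then show ?thesis by (intro exI[of _ 1] exI[of _ 3]) (simp add: mu_q_def)
  next
    assume "q = 19" then show ?thesis by (intro exI[of _ 1] exI[of _ 5]) (simp add: mu_q_def)
  next
    assume "q = 43" then show ?thesis by (intro exI[of _ 1] exI[of _ 11]) (simp add: mu_q_def)
  next
    assume "q = 67" then show ?thesis by (intro exI[of _ 1] exI[of _ 17]) (simp add: mu_q_def)
  next
    assume "q = 163" then show ?thesis by (intro exI[of _ 1] exI[of _ 41]) (simp add: mu_q_def)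
  qed
qed

theorem proposition1p2:
  fixes q :: nat and n :: real
  assumes "q \<in> admissible_q"
    and "n \<in> N_set q"
  shows "{theta_angle (z_q q) (\<gamma> (z_q q)) | \<gamma>. \<gamma> \<in> Gamma_n q n \<and> \<gamma> (z_q q) \<noteq> z_q q}
       = {Arg (Complex x y) | x y :: real.
            Complex x y \<noteq> 0 \<and>
            Complex y x \<in> O_K q \<and>
            normK (Complex y x) = n\<^sup>2 - 4 * (lambda_q q) ^ 4 \<and>
            (\<exists>k :: int. 2 * y - 2 * n = real q * of_int k)}"
proof -
  obtain t m :: int where mu: "mu_q q = of_int t / 2" and qm: "4*m - t^2 = int q"
    and qset: "int q \<in> {3,4,7,8,11,19,43,67,163}"
    using q_setup[OF assms(1)] by blast
  define s where "s = sqrt (real q)"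
  have q3: "q \<ge> 3" using qset by auto
  have s: "s > 0" unfolding s_def using q3 by simp
  have sq: "s^2 = real q" unfolding s_def by simp
  have s2: "s^2 = of_int (4*m - t^2)" unfolding sq qm by simp
  have mm: "(of_int t / 2)^2 + s^2/4 = real_of_int m" using s2 by (simp add: field_simps power2_eq_square)
  have qp: "4*m - t^2 > 0" using qm q3 by simp
  define z where "z = Complex (of_int t/2) (s/2)"
  have cz: "cnj z = of_int t - z" using z_lin(2)[OF s2] unfolding z_def .
  have zq: "z_q q = z" unfolding z_q_def z_def mu lambda_q_def s_def ..
  have lam: "lambda_q q = s/2" unfolding lambda_q_def s_def ..
  have Rf: "R_fun q \<gamma> = 2*(s/2)^2 * cosh_rho z (\<gamma> z)" for \<gamma> unfolding R_fun_def zq lam ..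
  have nored': "\<And>A B C::int. 2 \<le> A \<Longrightarrow> A \<le> C \<Longrightarrow> \<bar>B\<bar> \<le> A \<Longrightarrow> B^2 - 4*A*C = -(4*m - t^2) \<Longrightarrow> False"
    using nored[OF qset] unfolding qm by blast
  have fwd: "\<exists>A B C. A > 0 \<and> B^2 - 4*A*C = -(4*m - t^2) \<and> \<gamma> z = wpt s A B C" if g0: "\<gamma> \<in> Defs.Gamma" for \<gamma>
  proof -
    obtain a b c d :: int where g: "\<gamma> = Defs.moebius a b c d" and det: "a*d - b*c = 1"
      using g0 unfolding Defs.Gamma_def by auto
    show ?thesis using orbit_fwd[OF s s2 qp det] unfolding g z_def by blast
  qed
  let ?val = "\<lambda>A B C::int. of_int A * of_int m + of_int t * of_int B / 2 + (of_int C :: real)"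
  let ?QZ = "\<lambda>A B C::int. of_int A * z^2 + of_int B * z + of_int C"
  note ff = form_facts[OF s s2 _ _ z_def refl refl]
  have npos: "n > 0"
  proof -
    obtain \<gamma> where g: "\<gamma> \<in> Defs.Gamma" and n: "n = R_fun q \<gamma>" using assms(2) unfolding N_set_def by blast
    obtain A B C where A: "A > 0" and d: "B^2 - 4*A*C = -(4*m - t^2)" and w: "\<gamma> z = wpt s A B C"
      using fwd[OF g] by blast
    show ?thesis using ff(1,6)[OF A d] n unfolding Rf w by simp
  qed
  have lam4: "4 * (lambda_q q)^4 = s^4/4" unfolding lam by (simp add: power_divide)
  show ?thesis
  proof (rule equalityI; rule subsetI)
    fix \<theta> assume "\<theta> \<in> {theta_angle (z_q q) (\<gamma> (z_q q)) | \<gamma>. \<gamma> \<in> Gamma_n q n \<and> \<gamma> (z_q q) \<noteq> z_q q}"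
    then have "\<exists>\<gamma>. \<theta> = theta_angle (z_q q) (\<gamma> (z_q q)) \<and> \<gamma> \<in> Gamma_n q n \<and> \<gamma> (z_q q) \<noteq> z_q q"
      by (simp only: mem_Collect_eq)
    then obtain \<gamma> where P0: "\<theta> = theta_angle (z_q q) (\<gamma> (z_q q)) \<and> \<gamma> \<in> Gamma_n q n \<and> \<gamma> (z_q q) \<noteq> z_q q"
      by (rule exE)
    have th: "\<theta> = theta_angle z (\<gamma> z)" and gn: "\<gamma> \<in> Gamma_n q n" and ne: "\<gamma> z \<noteq> z"
      using P0 unfolding zq by simp_all
    have g: "\<gamma> \<in> Defs.Gamma" and Rn: "R_fun q \<gamma> = n" using gn unfolding Gamma_n_def by simp_all
    obtain A B C where A: "A > 0" and d: "B^2 - 4*A*C = -(4*m - t^2)" and w: "\<gamma> z = wpt s A B C"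
      using fwd[OF g] by blast
    note F = ff[OF A d]
    define Q where "Q = ?QZ A B C"
    have nv: "n = ?val A B C" using Rn F(1) unfolding Rf w by simp
    have Q0: "Q \<noteq> 0" using F(3) ne unfolding w Q_def by simp
    define x where "x = - Im Q"
    define y where "y = Re Q"
    have cxy: "Complex x y = \<i> * Q" unfolding x_def y_def by (simp add: complex_eq_iff)
    have cyx: "Complex y x = cnj Q" unfolding x_def y_def by (simp add: complex_eq_iff)
    have "Complex y x \<in> O_K q"
    proof -
      have "cnj Q = of_int (C - A*m) + of_int (A*t + B) * cnj z"
        unfolding Q_def z_lin(1)[OF s2, folded z_def] by simp
      also have "\<dots> = of_int (C - A*m + (A*t + B)*t) + of_int (-(A*t + B)) * z"
        unfolding cz by (simp add: algebra_simps)
      finally have "cnj Q = of_int (C - A*m + (A*t + B)*t) + of_int (-(A*t + B)) * z" .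
      then show ?thesis unfolding cyx O_K_def zq by blast
    qed
    moreover have "Complex x y \<noteq> 0" unfolding cxy using Q0 by simp
    moreover have "normK (Complex y x) = n\<^sup>2 - 4 * (lambda_q q) ^ 4"
      unfolding normK_def cyx lam4 complex_mod_cnj nv using F(4) unfolding Q_def by simp
    moreover have "2 * y - 2 * n = real q * of_int (-A)"
    proof -
      have "2*y - 2*n = - of_int A * s^2" unfolding y_def nv Q_def F(5) by simp
      then show ?thesis unfolding sq by simp
    qed
    ultimately have P: "Complex x y \<noteq> 0 \<and> Complex y x \<in> O_K q \<and>
            normK (Complex y x) = n\<^sup>2 - 4 * (lambda_q q) ^ 4 \<and>
            (\<exists>k :: int. 2 * y - 2 * n = real q * of_int k)" by blast
    have teq: "\<theta> = Arg (Complex x y)" unfolding th w F(2) cxy Q_def ..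
    show "\<theta> \<in> {Arg (Complex x y) | x y :: real.
            Complex x y \<noteq> 0 \<and> Complex y x \<in> O_K q \<and>
            normK (Complex y x) = n\<^sup>2 - 4 * (lambda_q q) ^ 4 \<and>
            (\<exists>k :: int. 2 * y - 2 * n = real q * of_int k)}"
      unfolding mem_Collect_eq by (rule exI[of _ x], rule exI[of _ y], rule conjI[OF teq P])
  next
    fix \<theta> assume "\<theta> \<in> {Arg (Complex x y) | x y :: real.
            Complex x y \<noteq> 0 \<and> Complex y x \<in> O_K q \<and>
            normK (Complex y x) = n\<^sup>2 - 4 * (lambda_q q) ^ 4 \<and>
            (\<exists>k :: int. 2 * y - 2 * n = real q * of_int k)}"
    then have "\<exists>x y. \<theta> = Arg (Complex x y) \<and> Complex x y \<noteq> 0 \<and> Complex y x \<in> O_K q \<and>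
            normK (Complex y x) = n\<^sup>2 - 4 * (lambda_q q) ^ 4 \<and>
            (\<exists>k :: int. 2 * y - 2 * n = real q * of_int k)"
      by (simp only: mem_Collect_eq)
    then obtain x y where P0: "\<theta> = Arg (Complex x y) \<and> Complex x y \<noteq> 0 \<and> Complex y x \<in> O_K q \<and>
            normK (Complex y x) = n\<^sup>2 - 4 * (lambda_q q) ^ 4 \<and>
            (\<exists>k :: int. 2 * y - 2 * n = real q * of_int k)"
      by (elim exE)
    have th: "\<theta> = Arg (Complex x y)" and nz: "Complex x y \<noteq> 0"
      and OK: "Complex y x \<in> O_K q" and nrm: "normK (Complex y x) = n\<^sup>2 - 4 * (lambda_q q) ^ 4"
      and kx: "\<exists>k :: int. 2 * y - 2 * n = real q * of_int k"
      using P0 by simp_all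
    from kx obtain k :: int where kk: "2 * y - 2 * n = real q * of_int k" by (elim exE)
    obtain e f :: int where ef: "Complex y x = of_int e + of_int f * z"
      using OK unfolding O_K_def zq by blast
    define A where "A = -k"
    define B where "B = -f - A*t"
    define C where "C = e + f*t + A*m"
    define Q where "Q = ?QZ A B C"
    have ce: "cnj (Complex y x) = of_int e + of_int f * (of_int t - z)"
      unfolding ef cz[symmetric] by simp
    have Qe: "Q = cnj (Complex y x)"
      unfolding Q_def z_lin(1)[OF s2, folded z_def] ce
      by (simp add: A_def B_def C_def algebra_simps)
    have yv: "y = of_int e + of_int f * of_int t / 2"
      using arg_cong[OF ef, of Re] unfolding z_def by simp
    have nv: "n = ?val A B C"
    proof -
      have "n = y - real q * of_int k / 2" using kk by simp
      also have "\<dots> = ?val A B C"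
      proof -
        have qr: "real q = 4 * of_int m - of_int t * of_int t"
          using arg_cong[OF qm, of real_of_int] by (simp add: power2_eq_square)
        show ?thesis unfolding yv A_def B_def C_def qr by (simp add: algebra_simps field_simps)
      qed
      finally show ?thesis .
    qed
    have nQ: "(cmod Q)^2 = (?val A B C)^2 - s^2 * (4* of_int A* of_int C - (of_int B)^2)/4"
      using QZ_norm[of "of_int A" "of_int t/2" s "of_int B" "of_int C"]
      unfolding Q_def z_def mm by (simp add: algebra_simps)
    have cm: "(cmod Q)^2 = n^2 - s^4/4"
      unfolding Qe complex_mod_cnj using nrm unfolding normK_def lam4 .
    have "s^2 * (4* of_int A* of_int C - (of_int B)^2)/4 = s^4/4"
      using nQ cm nv by simp
    then have "(4* of_int A* of_int C - (of_int B)^2) = s^2"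
      using s by (simp add: power4_eq_xxxx power2_eq_square)
    then have "real_of_int (4*A*C - B^2) = of_int (4*m - t^2)" unfolding s2 by simp
    then have d: "B^2 - 4*A*C = -(4*m - t^2)" by linarith
    define P where "P = 2*(A*m) + t*B + 2*C"
    have Pv: "real_of_int P = 2 * ?val A B C" unfolding P_def by simp
    have "real_of_int P = 2 * n" unfolding Pv nv ..
    then have "real_of_int P > 0" using npos by simp
    then have "P > 0" by simp
    have id: "2*A*P = (B + t*A)^2 + (4*m - t^2)*A^2 + (4*m - t^2)"
      unfolding P_def using d by algebra
    have "(B + t*A)^2 + (4*m - t^2)*A^2 + (4*m - t^2) > 0"
      using qp by (smt (verit) zero_le_power2 mult_nonneg_nonneg)
    then have "2*A*P > 0" unfolding id .
    then have A: "A > 0" using \<open>P > 0\<close> by (simp add: zero_less_mult_iff)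
    note F = ff[OF A d]
    have ex: "\<exists>a b c d. a*d - b*c = 1 \<and> Defs.moebius a b c d (Complex (of_int t/2) (s/2)) = wpt s A B C"
    proof (rule orbit_bwd[OF s s2 qp])
      fix A' B' C' :: int assume "2 \<le> A'" "A' \<le> C'" "\<bar>B'\<bar> \<le> A'" "B'^2 - 4*A'*C' = -(4*m - t^2)"
      then show False by (rule nored')
    qed (use A d in simp_all)
    obtain a b c dd where det: "a*dd - b*c = 1" and g: "Defs.moebius a b c dd z = wpt s A B C"
      using ex unfolding z_def by blast
    define \<gamma> where "\<gamma> = Defs.moebius a b c dd"
    have gG: "\<gamma> \<in> Defs.Gamma" unfolding \<gamma>_def Defs.Gamma_def using det by blast
    have gz: "\<gamma> z = wpt s A B C" unfolding \<gamma>_def g ..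
    have Rn: "R_fun q \<gamma> = n" unfolding Rf gz F(1) nv ..
    have "Complex y x \<noteq> 0" using nz by (auto simp add: complex_eq_iff)
    then have "Q \<noteq> 0" unfolding Qe by simp
    then have ne: "\<gamma> z \<noteq> z" unfolding gz using F(3) unfolding Q_def by simp
    have "\<i> * Q = Complex x y" unfolding Qe by (simp add: complex_eq_iff)
    then have t1: "\<theta> = Arg (\<i> * Q)" unfolding th by simp
    have t2: "theta_angle z (\<gamma> z) = Arg (\<i> * Q)" unfolding gz Q_def by (rule F(2))
    have teq: "\<theta> = theta_angle (z_q q) (\<gamma> (z_q q))" unfolding zq t1 t2 ..
    have gn: "\<gamma> \<in> Gamma_n q n" unfolding Gamma_n_def using gG Rn by simp
    have ne': "\<gamma> (z_q q) \<noteq> z_q q" unfolding zq by (rule ne)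
    show "\<theta> \<in> {theta_angle (z_q q) (\<gamma> (z_q q)) | \<gamma>. \<gamma> \<in> Gamma_n q n \<and> \<gamma> (z_q q) \<noteq> z_q q}"
      unfolding mem_Collect_eq by (rule exI[of _ \<gamma>], rule conjI[OF teq conjI[OF gn ne']])
  qed
qed

end
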